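(* Let $T>0$, $x_0\in\mathbb{R}$, $\gamma_P,\gamma_A>0$, and let $(W,a)\in\mathcal{C}$. Then the inequality $$\mathbb{E}\left[U_P\left(X_T^a-W\right)\right]\leq -\,\mathbb{E}\left[\left|U_P\left(X_T^a-\int_0^T\kappa(a_t)\,dt\right)\right|^{\frac{\gamma_A}{\gamma_A+\gamma_P}}\right]^{\frac{\gamma_A+\gamma_P}{\gamma_A}}\times\left(-\mathbb{E}\left[U_A\left(W-\int_0^T\kappa(a_t)\,dt\right)\right]\right)^{-\frac{\gamma_P}{\gamma_A}}$$ (which always holds) is an equality if and only if there exists a constant $\alpha>0$ such that $$\frac{U_P'\left(X_T^a-W\right)}{U_A'\left(W-\int_0^T\kappa(a_t)\,dt\right)}=\alpha,\quad \mathbb{P}\text{-a.s.}$$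
   Context: Fix $T>0$. Let $(\Omega,\mathcal{F},\mathbb{P})$ be a probability space carrying a standard one-dimensional Brownian motion $B=(B_t)_{t\in[0,T]}$, and let $\mathbb{F}=(\mathcal{F}_t)_{t\in[0,T]}$ be its natural completed filtration. Let $\mathbb{H}_2$ be the set of $\mathbb{F}$-predictable processes $a=(a_t)_{t\in[0,T]}$ with values in $[0,\infty)$ such that $\mathbb{E}[\exp(q\int_0^T|a_t|^2dt)]<\infty$ for all $q>0$. For $a\in\mathbb{H}_2$ and a fixed $x_0\in\mathbb{R}$, set $X_t^a=x_0+\int_0^t a_s\,ds+B_t$. Let $\mathcal{W}$ be the set of $\mathcal{F}_T$-measurable random variables $W$ with $\mathbb{E}[\exp(qW)]<\infty$ for all $q\in\mathbb{R}\setminus\{0\}$, and $\mathcal{C}=\{(W,a):W\in\mathcal{W},a\in\mathbb{H}_2\}$. The cost function $\kappa:[0,\infty)\to\mathbb{R}$ is strictly convex, continuous, non-decreasing, with invertible derivative $\kappa'$. With $\gamma_P,\gamma_A>0$, $U_P(x)=-\exp(-\gamma_P x)$ and $U_A(x)=-\exp(-\gamma_A x)$. *)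

theory Defs
  imports "HOL-Probability.Probability"
begin

definition strictly_convex_on :: "real set \<Rightarrow> (real \<Rightarrow> real) \<Rightarrow> bool" where
  "strictly_convex_on S f \<longleftrightarrow>
     (\<forall>x\<in>S. \<forall>y\<in>S. x \<noteq> y \<longrightarrow> (\<forall>u::real. 0 < u \<and> u < 1 \<longrightarrow>
        f (u * x + (1 - u) * y) < u * f x + (1 - u) * f y))"

definition brownian_motion :: "'a measure \<Rightarrow> real \<Rightarrow> (real \<Rightarrow> 'a \<Rightarrow> real) \<Rightarrow> bool" where
  "brownian_motion M T B \<longleftrightarrow>
     (\<forall>t\<in>{0..T}. B t \<in> borel_measurable M) \<and>
     (\<forall>\<omega>\<in>space M. B 0 \<omega> = 0) \<and>
     (\<forall>\<omega>\<in>space M. continuous_on {0..T} (\<lambda>t. B t \<omega>)) \<and>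
     (\<forall>s t. 0 \<le> s \<and> s < t \<and> t \<le> T \<longrightarrow>
        distributed M lborel (\<lambda>\<omega>. B t \<omega> - B s \<omega>) (normal_density 0 (sqrt (t - s)))) \<and>
     (\<forall>(n::nat) (ts::nat \<Rightarrow> real). 0 \<le> ts 0 \<and> (\<forall>i<n. ts i < ts (Suc i)) \<and> ts n \<le> T \<longrightarrow>
        prob_space.indep_vars M (\<lambda>_. borel) (\<lambda>i \<omega>. B (ts (Suc i)) \<omega> - B (ts i) \<omega>) {..<n})"

definition null_sets_P :: "'a measure \<Rightarrow> 'a set set" where
  "null_sets_P M = {N \<in> sets M. emeasure M N = 0}"

definition nat_filt :: "'a measure \<Rightarrow> (real \<Rightarrow> 'a \<Rightarrow> real) \<Rightarrow> real \<Rightarrow> 'a set set" where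
  "nat_filt M B t = sigma_sets (space M)
     ({B s -` U \<inter> space M | s U. 0 \<le> s \<and> s \<le> t \<and> U \<in> sets borel} \<union> null_sets_P M)"

definition predictable_sets :: "'a measure \<Rightarrow> (real \<Rightarrow> 'a \<Rightarrow> real) \<Rightarrow> real \<Rightarrow> (real \<times> 'a) set set" where
  "predictable_sets M B T = sigma_sets ({0..T} \<times> space M)
     ({{0} \<times> A | A. A \<in> nat_filt M B 0} \<union>
      {{s<..t} \<times> A | s t A. 0 \<le> s \<and> s < t \<and> t \<le> T \<and> A \<in> nat_filt M B s})"

definition predictable :: "'a measure \<Rightarrow> (real \<Rightarrow> 'a \<Rightarrow> real) \<Rightarrow> real \<Rightarrow> (real \<Rightarrow> 'a \<Rightarrow> real) \<Rightarrow> bool" where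
  "predictable M B T a \<longleftrightarrow>
     (\<lambda>(t, \<omega>). a t \<omega>) \<in> measurable (sigma ({0..T} \<times> space M) (predictable_sets M B T)) borel"

definition sq_int :: "real \<Rightarrow> (real \<Rightarrow> 'a \<Rightarrow> real) \<Rightarrow> 'a \<Rightarrow> ennreal" where
  "sq_int T a \<omega> = (\<integral>\<^sup>+ t \<in> {0..T}. ennreal ((a t \<omega>)\<^sup>2) \<partial>lborel)"

text \<open>The class H_2: predictable, [0,oo)-valued, E[exp(q int_0^T |a_t|^2 dt)] < oo for all q > 0
  (with exp(+oo) = +oo, i.e. the integral is a.s. finite).\<close>
definition H2 :: "'a measure \<Rightarrow> (real \<Rightarrow> 'a \<Rightarrow> real) \<Rightarrow> real \<Rightarrow> (real \<Rightarrow> 'a \<Rightarrow> real) \<Rightarrow> bool" where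
  "H2 M B T a \<longleftrightarrow> predictable M B T a \<and>
     (\<forall>t\<in>{0..T}. \<forall>\<omega>\<in>space M. 0 \<le> a t \<omega>) \<and>
     (\<forall>q::real. q > 0 \<longrightarrow>
        (AE \<omega> in M. sq_int T a \<omega> < \<infinity>) \<and>
        (\<integral>\<^sup>+ \<omega>. ennreal (exp (q * enn2real (sq_int T a \<omega>))) \<partial>M) < \<infinity>)"

definition Wset :: "'a measure \<Rightarrow> (real \<Rightarrow> 'a \<Rightarrow> real) \<Rightarrow> real \<Rightarrow> ('a \<Rightarrow> real) \<Rightarrow> bool" where
  "Wset M B T W \<longleftrightarrow>
     W \<in> measurable (sigma (space M) (nat_filt M B T)) borel \<and>
     (\<forall>q::real. q \<noteq> 0 \<longrightarrow> integrable M (\<lambda>\<omega>. exp (q * W \<omega>)))"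

definition XT :: "real \<Rightarrow> real \<Rightarrow> (real \<Rightarrow> 'a \<Rightarrow> real) \<Rightarrow> (real \<Rightarrow> 'a \<Rightarrow> real) \<Rightarrow> 'a \<Rightarrow> real" where
  "XT x0 T B a \<omega> = x0 + (LINT s:{0..T}|lborel. a s \<omega>) + B T \<omega>"

definition cost :: "(real \<Rightarrow> real) \<Rightarrow> real \<Rightarrow> (real \<Rightarrow> 'a \<Rightarrow> real) \<Rightarrow> 'a \<Rightarrow> real" where
  "cost \<kappa> T a \<omega> = (LINT t:{0..T}|lborel. \<kappa> (a t \<omega>))"

definition U :: "real \<Rightarrow> real \<Rightarrow> real" where
  "U \<gamma> x = - exp (- \<gamma> * x)"

end

theory Submission
  imports Defs
begin

lemma young_t:
  fixes r t :: real
  assumes r: "0 < r" "r < 1" and t: "0 < t" "t \<noteq> 1"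
  shows "t powr r < r * t + (1 - r)"
proof -
  define h where "h = (\<lambda>x::real. r * x + (1 - r) - x powr r)"
  have der: "DERIV h x :> r - r * x powr (r - 1)" if "0 < x" for x
    unfolding h_def using that
    by (auto intro!: derivative_eq_intros has_real_derivative_powr)
  have h1: "h 1 = 0" by (simp add: h_def)
  show ?thesis
  proof (cases "t > 1")
    case True
    obtain z where z: "1 < z" "z < t" "h t - h 1 = (t - 1) * (r - r * z powr (r - 1))"
      using MVT2[of 1 t h "\<lambda>x. r - r * x powr (r - 1)"] True der by force
    have "z powr (r - 1) < 1" using z r by (simp add: powr_less_one)
    then have "r - r * z powr (r - 1) > 0" using r by simp
    then have "h t > 0" using z h1 True by simp
    then show ?thesis by (simp add: h_def)
  next
    case False
    then have tl: "t < 1" using t by simp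
    obtain z where z: "t < z" "z < 1" "h 1 - h t = (1 - t) * (r - r * z powr (r - 1))"
      using MVT2[of t 1 h "\<lambda>x. r - r * x powr (r - 1)"] tl der t by force
    have z0: "0 < z" using z t by simp
    have "z powr (r - 1) > 1" using z0 \<open>z < 1\<close> \<open>r < 1\<close>
      by (metis diff_less_0_iff_less powr_less_mono2_neg powr_one_eq_one)
    then have "r - r * z powr (r - 1) < 0" using r by simp
    then have "(1 - t) * (r - r * z powr (r - 1)) < 0" using tl by (simp add: mult_pos_neg)
    then have "h t > 0" using z h1 by simp
    then show ?thesis by (simp add: h_def)
  qed
qed

lemma young_ab:
  fixes r a b :: real
  assumes r: "0 < r" "r < 1" and ab: "0 < a" "0 < b"
  shows "a powr r * b powr (1 - r) \<le> r * a + (1 - r) * b"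
    and "a powr r * b powr (1 - r) = r * a + (1 - r) * b \<longleftrightarrow> a = b"
proof -
  have eq: "a powr r * b powr (1 - r) = b * (a / b) powr r"
    using ab by (simp add: powr_divide powr_diff field_simps)
  have eq2: "r * a + (1 - r) * b = b * (r * (a / b) + (1 - r))"
    using ab by (simp add: field_simps)
  have "(a / b) powr r \<le> r * (a / b) + (1 - r)"
    using young_t[OF r, of "a/b"] ab by (cases "a / b = 1") auto
  then show "a powr r * b powr (1 - r) \<le> r * a + (1 - r) * b"
    unfolding eq eq2 using ab by simp
  show "a powr r * b powr (1 - r) = r * a + (1 - r) * b \<longleftrightarrow> a = b"
  proof
    assume h: "a powr r * b powr (1 - r) = r * a + (1 - r) * b"
    show "a = b"
    proof (rule ccontr)
      assume "a \<noteq> b"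
      then have "a / b \<noteq> 1" using ab by simp
      then have "(a / b) powr r < r * (a / b) + (1 - r)"
        using young_t[OF r, of "a/b"] ab by auto
      then have "b * (a / b) powr r < b * (r * (a / b) + (1 - r))" using ab by simp
      then show False using h unfolding eq eq2 by simp
    qed
  next
    assume "a = b" then show "a powr r * b powr (1 - r) = r * a + (1 - r) * b"
      using ab by (simp add: powr_add[symmetric] algebra_simps)
  qed
qed
lemma pos_integral_pos:
  fixes F :: "'a \<Rightarrow> real"
  assumes P: "prob_space M" and Fi: "integrable M F" and pos: "\<And>x. x \<in> space M \<Longrightarrow> 0 < F x"
  shows "(\<integral>x. F x \<partial>M) > 0"
proof -
  interpret prob_space M by fact
  have ge: "(\<integral>x. F x \<partial>M) \<ge> 0" using pos by (simp add: integral_nonneg less_imp_le)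
  have "(\<integral>x. F x \<partial>M) \<noteq> 0"
  proof
    assume "(\<integral>x. F x \<partial>M) = 0"
    then have "AE x in M. F x = 0"
      using integral_nonneg_eq_0_iff_AE[OF Fi] pos by (simp add: less_imp_le)
    moreover have "AE x in M. 0 < F x" by (rule AE_I2) (rule pos)
    ultimately have "AE x in M. False" by eventually_elim simp
    then show False by simp
  qed
  then show ?thesis using ge by simp
qed

lemma holder_abstract:
  fixes M :: "'a measure" and F G :: "'a \<Rightarrow> real" and r :: real
  assumes P: "prob_space M" and r: "0 < r" "r < 1"
    and Fm[measurable]: "F \<in> borel_measurable M" and Gm[measurable]: "G \<in> borel_measurable M"
    and pos: "\<And>\<omega>. \<omega> \<in> space M \<Longrightarrow> 0 < F \<omega> \<and> 0 < G \<omega>"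
    and Fi: "integrable M F"
  shows "- (\<integral>\<omega>. F \<omega> \<partial>M) \<le> - ((\<integral>\<omega>. F \<omega> powr r * G \<omega> powr (1 - r) \<partial>M) powr (1 / r))
              * (\<integral>\<omega>. G \<omega> \<partial>M) powr (- ((1 - r) / r))
     \<and> (- (\<integral>\<omega>. F \<omega> \<partial>M) = - ((\<integral>\<omega>. F \<omega> powr r * G \<omega> powr (1 - r) \<partial>M) powr (1 / r))
              * (\<integral>\<omega>. G \<omega> \<partial>M) powr (- ((1 - r) / r))
        \<longleftrightarrow> (\<exists>\<alpha>>0. AE \<omega> in M. F \<omega> / G \<omega> = \<alpha>))"
proof -
  interpret prob_space M by fact
  define EF where "EF = (\<integral>\<omega>. F \<omega> \<partial>M)"
  define EG where "EG = (\<integral>\<omega>. G \<omega> \<partial>M)"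
  define H where "H = (\<lambda>\<omega>. F \<omega> powr r * G \<omega> powr (1 - r))"
  define EH where "EH = (\<integral>\<omega>. H \<omega> \<partial>M)"
  define s where "s = (1 - r) / r"
  have Hm[measurable]: "H \<in> borel_measurable M" unfolding H_def by measurable
  have EFp: "EF > 0" unfolding EF_def using pos_integral_pos[OF P Fi] pos by auto
  show ?thesis
  proof (cases "integrable M G")
    case False
    then have "EG = 0" unfolding EG_def by (rule not_integrable_integral_eq)
    then have rhs: "- ((\<integral>\<omega>. F \<omega> powr r * G \<omega> powr (1 - r) \<partial>M) powr (1 / r))
              * (\<integral>\<omega>. G \<omega> \<partial>M) powr (- ((1 - r) / r)) = 0" unfolding EG_def by simp
    have "\<not> (\<exists>\<alpha>>0. AE \<omega> in M. F \<omega> / G \<omega> = \<alpha>)"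
    proof
      assume "\<exists>\<alpha>>0. AE \<omega> in M. F \<omega> / G \<omega> = \<alpha>"
      then obtain \<alpha> where al: "\<alpha> > 0" "AE \<omega> in M. F \<omega> / G \<omega> = \<alpha>" by blast
      have "AE \<omega> in M. 0 < F \<omega> \<and> 0 < G \<omega>" by (rule AE_I2) (rule pos)
      then have "AE \<omega> in M. F \<omega> / \<alpha> = G \<omega>"
        using al(2) by eventually_elim (use al(1) in \<open>auto simp: field_simps\<close>)
      then have "integrable M G"
        using integrable_cong_AE_imp[of M "\<lambda>\<omega>. F \<omega> / \<alpha>" G] Fi by simp
      then show False using False by simp
    qed
    then show ?thesis unfolding rhs using EFp unfolding EF_def by auto
  next
    case Gi: True
    have EGp: "EG > 0" unfolding EG_def using pos_integral_pos[OF P Gi] pos by auto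
    define K where "K = EF powr r * EG powr (1 - r)"
    have Kp: "K > 0" unfolding K_def using EFp EGp by simp
    define Y where "Y = (\<lambda>\<omega>. K * (r * (F \<omega> / EF) + (1 - r) * (G \<omega> / EG)))"
    have HY: "H \<omega> = K * ((F \<omega> / EF) powr r * (G \<omega> / EG) powr (1 - r))" if "\<omega> \<in> space M" for \<omega>
      using pos[OF that] EFp EGp unfolding H_def K_def by (simp add: powr_divide)
    have HleY: "H \<omega> \<le> Y \<omega>" if "\<omega> \<in> space M" for \<omega>
      unfolding HY[OF that] Y_def using young_ab(1)[OF r, of "F \<omega> / EF" "G \<omega> / EG"] pos[OF that] EFp EGp Kp
      by (simp add: mult_left_mono)
    have H0: "0 \<le> H \<omega>" for \<omega> unfolding H_def by simp
    have Yi: "integrable M Y" unfolding Y_def using Fi Gi by simp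
    have EY: "(\<integral>\<omega>. Y \<omega> \<partial>M) = K"
      unfolding Y_def using Fi Gi EFp EGp by (simp add: EF_def EG_def field_simps)
    have Hi: "integrable M H"
      by (rule Bochner_Integration.integrable_bound[OF Yi Hm]) (use HleY H0 in \<open>force intro!: AE_I2\<close>)
    have EHle: "EH \<le> K" unfolding EH_def EY[symmetric] by (rule integral_mono[OF Hi Yi HleY])
    have EH0: "EH \<ge> 0" unfolding EH_def using H0 by simp
    have Kpow: "K powr (1 / r) = EF * EG powr s"
      unfolding K_def s_def using EFp EGp r by (simp add: powr_mult powr_powr)
    have Gs: "EG powr s * EG powr (- s) = 1" using EGp by (simp add: powr_add[symmetric])
    have Gsp: "EG powr (- s) > 0" using EGp by simp
    have "EH powr (1 / r) \<le> K powr (1 / r)" using EHle EH0 r by (simp add: powr_mono2)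
    then have "EH powr (1 / r) * EG powr (- s) \<le> EF * EG powr s * EG powr (- s)"
      unfolding Kpow using Gsp by (simp add: mult_right_mono)
    then have ineq: "- EF \<le> - (EH powr (1 / r)) * EG powr (- s)" using Gs by (simp add: mult.assoc)
    have "(- EF = - (EH powr (1 / r)) * EG powr (- s)) \<longleftrightarrow> EH powr (1 / r) = K powr (1 / r)"
      unfolding Kpow
    proof
      assume "- EF = - (EH powr (1 / r)) * EG powr (- s)"
      then have "EF * EG powr s = EH powr (1 / r) * (EG powr (- s) * EG powr s)" by simp
      then show "EH powr (1 / r) = EF * EG powr s" using Gs by (simp add: mult.commute)
    next
      assume "EH powr (1 / r) = EF * EG powr s"
      then have "EH powr (1 / r) * EG powr (- s) = EF * (EG powr s * EG powr (- s))" by simp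
      then show "- EF = - (EH powr (1 / r)) * EG powr (- s)" using Gs by simp
    qed
    also have "\<dots> \<longleftrightarrow> EH = K"
    proof
      have inv: "(x powr (1 / r)) powr r = x" if "0 \<le> x" for x
        using r that by (simp add: powr_powr)
      assume "EH powr (1 / r) = K powr (1 / r)"
      then have "(EH powr (1 / r)) powr r = (K powr (1 / r)) powr r" by simp
      then show "EH = K" using inv[OF EH0] inv[of K] Kp by simp
    qed simp
    also have "\<dots> \<longleftrightarrow> (\<integral>\<omega>. Y \<omega> - H \<omega> \<partial>M) = 0"
    proof -
      have "(\<integral>\<omega>. Y \<omega> - H \<omega> \<partial>M) = K - EH"
        using Bochner_Integration.integral_diff[OF Yi Hi] EY unfolding EH_def by simp
      then show ?thesis by auto
    qed
    also have "\<dots> \<longleftrightarrow> (AE \<omega> in M. Y \<omega> - H \<omega> = 0)"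
      by (rule integral_nonneg_eq_0_iff_AE) (use Yi Hi HleY in auto)
    also have "\<dots> \<longleftrightarrow> (AE \<omega> in M. F \<omega> / G \<omega> = EF / EG)"
    proof (rule AE_cong)
      fix \<omega> assume w: "\<omega> \<in> space M"
      have "Y \<omega> - H \<omega> = 0 \<longleftrightarrow> (F \<omega> / EF) powr r * (G \<omega> / EG) powr (1 - r) = r * (F \<omega> / EF) + (1 - r) * (G \<omega> / EG)"
        unfolding HY[OF w] Y_def using Kp by auto
      also have "\<dots> \<longleftrightarrow> F \<omega> / EF = G \<omega> / EG"
        by (rule young_ab(2)[OF r]) (use pos[OF w] EFp EGp in auto)
      also have "\<dots> \<longleftrightarrow> F \<omega> / G \<omega> = EF / EG"
        using pos[OF w] EFp EGp by (auto simp: field_simps)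
      finally show "Y \<omega> - H \<omega> = 0 \<longleftrightarrow> F \<omega> / G \<omega> = EF / EG" .
    qed
    also have "\<dots> \<longleftrightarrow> (\<exists>\<alpha>>0. AE \<omega> in M. F \<omega> / G \<omega> = \<alpha>)"
    proof
      assume "AE \<omega> in M. F \<omega> / G \<omega> = EF / EG"
      then show "\<exists>\<alpha>>0. AE \<omega> in M. F \<omega> / G \<omega> = \<alpha>" using EFp EGp by (intro exI[of _ "EF / EG"]) auto
    next
      assume "\<exists>\<alpha>>0. AE \<omega> in M. F \<omega> / G \<omega> = \<alpha>"
      then obtain \<alpha> where al: "\<alpha> > 0" "AE \<omega> in M. F \<omega> / G \<omega> = \<alpha>" by blast
      have "AE \<omega> in M. 0 < F \<omega> \<and> 0 < G \<omega>" by (rule AE_I2) (rule pos)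
      then have "AE \<omega> in M. F \<omega> = \<alpha> * G \<omega>"
        using al(2) by eventually_elim (auto simp: field_simps)
      then have "EF = (\<integral>\<omega>. \<alpha> * G \<omega> \<partial>M)" unfolding EF_def by (rule integral_cong_AE[rotated 2]) auto
      then have "EF = \<alpha> * EG" unfolding EG_def by simp
      then have "\<alpha> = EF / EG" using EGp by simp
      then show "AE \<omega> in M. F \<omega> / G \<omega> = EF / EG" using al(2) by simp
    qed
    finally have eqv: "(- EF = - (EH powr (1 / r)) * EG powr (- s)) \<longleftrightarrow> (\<exists>\<alpha>>0. AE \<omega> in M. F \<omega> / G \<omega> = \<alpha>)" .
    show ?thesis using ineq eqv by (simp only: EF_def EG_def EH_def H_def s_def)
  qed
qed


lemma nat_filt_sub:
  assumes "brownian_motion M T B" "0 \<le> s" "s \<le> T"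
  shows "nat_filt M B s \<subseteq> sets M"
  unfolding nat_filt_def
proof (rule sets.sigma_sets_subset)
  have Bm: "B u \<in> borel_measurable M" if "0 \<le> u" "u \<le> s" for u
    using assms that unfolding brownian_motion_def by auto
  show "{B u -` U \<inter> space M |u U. 0 \<le> u \<and> u \<le> s \<and> U \<in> sets borel} \<union> null_sets_P M \<subseteq> sets M"
    using Bm unfolding null_sets_P_def by (auto intro: measurable_sets)
qed

lemma pred_joint:
  assumes bm: "brownian_motion M T B" and T: "0 \<le> T" and pa: "predictable M B T a"
  shows "(\<lambda>(t, \<omega>). a t \<omega>) \<in> borel_measurable (restrict_space lborel {0..T} \<Otimes>\<^sub>M M)"
proof -
  define N where "N = restrict_space lborel {0..T} \<Otimes>\<^sub>M M"
  have spN: "space N = {0..T} \<times> space M"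
    unfolding N_def by (simp add: space_pair_measure space_restrict_space)
  have intv: "I \<in> sets (restrict_space lborel {0..T})" if "I \<subseteq> {0..T}" "I \<in> sets borel" for I
  proof -
    have "I = {0..T} \<inter> I" using that by auto
    then show ?thesis unfolding sets_restrict_space using that by (auto intro!: image_eqI)
  qed
  have gen: "{{0} \<times> A | A. A \<in> nat_filt M B 0} \<union>
      {{s<..t} \<times> A | s t A. 0 \<le> s \<and> s < t \<and> t \<le> T \<and> A \<in> nat_filt M B s} \<subseteq> sets N"
  proof safe
    fix A assume "A \<in> nat_filt M B 0"
    then have "A \<in> sets M" using nat_filt_sub[OF bm _ T] by auto
    moreover have "{0} \<in> sets (restrict_space lborel {0..T})" using T by (intro intv) auto
    ultimately show "{0} \<times> A \<in> sets N" unfolding N_def by simp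
  next
    fix s t A assume st: "0 \<le> s" "s < t" "t \<le> T" "A \<in> nat_filt M B s"
    then have "A \<in> sets M" using nat_filt_sub[OF bm, of s] by auto
    moreover have "{s<..t} \<in> sets (restrict_space lborel {0..T})" using st by (intro intv) auto
    ultimately show "{s<..t} \<times> A \<in> sets N" unfolding N_def by simp
  qed
  have PS_sub: "predictable_sets M B T \<subseteq> sets N"
    unfolding predictable_sets_def spN[symmetric] by (rule sets.sigma_sets_subset[OF gen[unfolded spN[symmetric]]])
  have PS_pow: "predictable_sets M B T \<subseteq> Pow ({0..T} \<times> space M)"
    using PS_sub sets.sets_into_space[of _ N] spN by auto
  have "measurable (sigma ({0..T} \<times> space M) (predictable_sets M B T)) borel \<subseteq> measurable N borel"
  proof (rule measurable_mono)
    show "sets (sigma ({0..T} \<times> space M) (predictable_sets M B T)) \<subseteq> sets N"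
      unfolding sets_measure_of[OF PS_pow] using sets.sigma_sets_subset[OF PS_sub] spN by simp
    show "space (sigma ({0..T} \<times> space M) (predictable_sets M B T)) = space N"
      using PS_pow spN by simp
  qed auto
  then show ?thesis using pa unfolding predictable_def N_def by auto
qed

lemma LINT_meas:
  fixes T :: real and f :: "real \<Rightarrow> 'a \<Rightarrow> real"
  assumes "sigma_finite_measure M"
    and f: "(\<lambda>(t, \<omega>). f t \<omega>) \<in> borel_measurable (restrict_space lborel {0..T} \<Otimes>\<^sub>M M)"
  shows "(\<lambda>\<omega>. LINT s:{0..T}|lborel. f s \<omega>) \<in> borel_measurable M"
proof -
  interpret R: sigma_finite_measure "restrict_space lborel {0..T}"
    by (rule sigma_finite_measure_restrict_space[OF sigma_finite_lborel]) simp
  have eq: "(LINT s:{0..T}|lborel. f s \<omega>) = (\<integral>s. f s \<omega> \<partial>restrict_space lborel {0..T})" for \<omega>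
  proof -
    have S: "{0..T} \<in> sets (borel :: real measure)" by simp
    show ?thesis unfolding set_lebesgue_integral_def
      by (rule Bochner_Integration.integral_restrict_space[symmetric]) (use S in simp)
  qed
  have "case_prod (\<lambda>\<omega> s. f s \<omega>) \<in> borel_measurable (M \<Otimes>\<^sub>M restrict_space lborel {0..T})"
    using f measurable_pair_swap_iff[of "\<lambda>(t, \<omega>). f t \<omega>" "restrict_space lborel {0..T}" M borel]
    by (simp add: case_prod_beta')
  then have "(\<lambda>\<omega>. \<integral>s. f s \<omega> \<partial>restrict_space lborel {0..T}) \<in> borel_measurable M"
    by (rule R.borel_measurable_lebesgue_integral)
  then show ?thesis unfolding eq .
qed

lemma gauss_exp_integrable:
  assumes "\<sigma> > 0"
  shows "integrable lborel (\<lambda>x. normal_density 0 \<sigma> x * exp (c * x))"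
proof -
  have eq: "normal_density 0 \<sigma> x * exp (c * x) = exp (c\<^sup>2 * \<sigma>\<^sup>2 / 2) * normal_density (c * \<sigma>\<^sup>2) \<sigma> x" for x
  proof -
    have "-(x - 0)\<^sup>2 / (2 * \<sigma>\<^sup>2) + c * x = c\<^sup>2 * \<sigma>\<^sup>2 / 2 + -(x - c * \<sigma>\<^sup>2)\<^sup>2 / (2 * \<sigma>\<^sup>2)"
      using assms by (simp add: field_simps power2_eq_square)
    then show ?thesis unfolding normal_density_def
      by (simp add: exp_add[symmetric] mult.assoc)
  qed
  have "integrable lborel (\<lambda>x. exp (c\<^sup>2 * \<sigma>\<^sup>2 / 2) * normal_density (c * \<sigma>\<^sup>2) \<sigma> x)"
    using assms by (intro integrable_mult_right) simp
  then show ?thesis unfolding eq .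
qed

lemma bm_exp_integrable:
  assumes bm: "brownian_motion M T B" and T: "0 < T"
  shows "integrable M (\<lambda>\<omega>. exp (c * B T \<omega>))"
proof -
  have "\<forall>s t. 0 \<le> s \<and> s < t \<and> t \<le> T \<longrightarrow>
        distributed M lborel (\<lambda>\<omega>. B t \<omega> - B s \<omega>) (normal_density 0 (sqrt (t - s)))"
    using bm unfolding brownian_motion_def by blast
  then have "distributed M lborel (\<lambda>\<omega>. B T \<omega> - B 0 \<omega>) (normal_density 0 (sqrt (T - 0)))"
    using T by blast
  then have d: "distributed M lborel (\<lambda>\<omega>. B T \<omega> - B 0 \<omega>) (normal_density 0 (sqrt T))"
    by simp
  have "integrable M (\<lambda>\<omega>. exp (c * (B T \<omega> - B 0 \<omega>)))"
    using distributed_integrable[OF d, of "\<lambda>x. exp (c * x)"] gauss_exp_integrable[of "sqrt T" c] T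
    by (simp add: normal_density_nonneg)
  moreover have "\<omega> \<in> space M \<Longrightarrow> exp (c * (B T \<omega> - B 0 \<omega>)) = exp (c * B T \<omega>)" for \<omega>
    using bm unfolding brownian_motion_def by auto
  ultimately show ?thesis using Bochner_Integration.integrable_cong[where M=M and N=M and f="\<lambda>\<omega>. exp (c * (B T \<omega> - B 0 \<omega>))" and g="\<lambda>\<omega>. exp (c * B T \<omega>)"] by simp
qed


lemma exp_bound:
  fixes \<gamma> x0 I b w :: real
  assumes "\<gamma> > 0" "I \<ge> 0"
  shows "exp (- \<gamma> * (x0 + I + b - w)) \<le> exp (- \<gamma> * x0) * ((exp ((- 2 * \<gamma>) * b) + exp ((2 * \<gamma>) * w)) / 2)"
proof -
  define p where "p = exp (- \<gamma> * b)"
  define q where "q = exp (\<gamma> * w)"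
  have pq: "p * q \<le> (p\<^sup>2 + q\<^sup>2) / 2"
  proof -
    have "0 \<le> (p - q)\<^sup>2" by simp
    then show ?thesis by (simp add: power2_eq_square algebra_simps)
  qed
  have p2: "p\<^sup>2 = exp ((- 2 * \<gamma>) * b)" unfolding p_def power2_eq_square mult_exp_exp by simp
  have q2: "q\<^sup>2 = exp ((2 * \<gamma>) * w)" unfolding q_def power2_eq_square mult_exp_exp by simp
  have eI: "exp (- \<gamma> * I) \<le> 1" using assms by simp
  have eq: "exp (- \<gamma> * (x0 + I + b - w)) = exp (- \<gamma> * x0) * exp (- \<gamma> * I) * (p * q)"
    unfolding p_def q_def mult_exp_exp by (simp add: algebra_simps)
  have "exp (- \<gamma> * x0) * exp (- \<gamma> * I) * (p * q) \<le> exp (- \<gamma> * x0) * 1 * ((p\<^sup>2 + q\<^sup>2) / 2)"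
    by (intro mult_mono eI pq) (auto simp: p_def q_def)
  then show ?thesis unfolding eq p2 q2 by simp
qed

lemma ar_lemma:
  fixes k q p x c w :: real
  assumes "k = q + p" "k > 0"
  shows "- p * (x - c) * (q / k) = - p * (x - w) * (q / k) + - q * (w - c) * (1 - q / k)"
proof -
  have "1 - q / k = (k - q) / k" using assms(2) by (simp add: diff_divide_distrib)
  also have "k - q = p" using assms(1) by simp
  finally have e: "1 - q / k = p / k" .
  have "- p * (x - c) * q = - p * (x - w) * q + - q * (w - c) * p" by (simp add: algebra_simps)
  then have "- p * (x - c) * q / k = - p * (x - w) * q / k + - q * (w - c) * p / k"
    by (simp add: diff_divide_distrib)
  then show ?thesis unfolding e by simp
qed

lemma deriv_U: "deriv (U \<gamma>) y = \<gamma> * exp (- \<gamma> * y)"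
proof -
  have "(U \<gamma> has_real_derivative \<gamma> * exp (- \<gamma> * y)) (at y)"
    unfolding U_def[abs_def] by (auto intro!: derivative_eq_intros)
  then show ?thesis by (rule DERIV_imp_deriv)
qed


theorem theorem3p3:
  fixes M :: "'a measure" and B :: "real \<Rightarrow> 'a \<Rightarrow> real" and T x0 \<gamma>P \<gamma>A :: real
    and \<kappa> \<kappa>' :: "real \<Rightarrow> real" and W :: "'a \<Rightarrow> real" and a :: "real \<Rightarrow> 'a \<Rightarrow> real"
  assumes "prob_space M"
    and "T > 0"
    and "brownian_motion M T B"
    and "\<gamma>P > 0" and "\<gamma>A > 0"
    and "strictly_convex_on {0..} \<kappa>"
    and "continuous_on {0..} \<kappa>"
    and "mono_on {0..} \<kappa>"
    and "\<And>x. x \<ge> 0 \<Longrightarrow> (\<kappa> has_real_derivative \<kappa>' x) (at x within {0..})"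
    and "inj_on \<kappa>' {0..}"
    and "Wset M B T W"
    and "H2 M B T a"
  shows "(\<integral>\<omega>. U \<gamma>P (XT x0 T B a \<omega> - W \<omega>) \<partial>M)
           \<le> - ((\<integral>\<omega>. \<bar>U \<gamma>P (XT x0 T B a \<omega> - cost \<kappa> T a \<omega>)\<bar> powr (\<gamma>A / (\<gamma>A + \<gamma>P)) \<partial>M)
                   powr ((\<gamma>A + \<gamma>P) / \<gamma>A))
             * (- (\<integral>\<omega>. U \<gamma>A (W \<omega> - cost \<kappa> T a \<omega>) \<partial>M)) powr (- \<gamma>P / \<gamma>A)
       \<and> ((\<integral>\<omega>. U \<gamma>P (XT x0 T B a \<omega> - W \<omega>) \<partial>M)
           = - ((\<integral>\<omega>. \<bar>U \<gamma>P (XT x0 T B a \<omega> - cost \<kappa> T a \<omega>)\<bar> powr (\<gamma>A / (\<gamma>A + \<gamma>P)) \<partial>M)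
                   powr ((\<gamma>A + \<gamma>P) / \<gamma>A))
             * (- (\<integral>\<omega>. U \<gamma>A (W \<omega> - cost \<kappa> T a \<omega>) \<partial>M)) powr (- \<gamma>P / \<gamma>A)
          \<longleftrightarrow> (\<exists>\<alpha>>0. AE \<omega> in M.
                 deriv (U \<gamma>P) (XT x0 T B a \<omega> - W \<omega>) / deriv (U \<gamma>A) (W \<omega> - cost \<kappa> T a \<omega>) = \<alpha>))"
  
proof -
  interpret P: prob_space M by (rule assms(1))
  have T0: "0 \<le> T" using assms(2) by simp
  have Wi: "\<And>q. q \<noteq> 0 \<Longrightarrow> integrable M (\<lambda>\<omega>. exp (q * W \<omega>))"
    using assms(11) unfolding Wset_def by blast
  have "(\<lambda>\<omega>. ln (exp (1 * W \<omega>))) \<in> borel_measurable M"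
    using borel_measurable_integrable[OF Wi[of 1]] by measurable
  then have Wm[measurable]: "W \<in> borel_measurable M" by simp
  have BTm[measurable]: "B T \<in> borel_measurable M"
    using assms(3) T0 unfolding brownian_motion_def by auto
  have anonneg: "\<And>t \<omega>. t \<in> {0..T} \<Longrightarrow> \<omega> \<in> space M \<Longrightarrow> 0 \<le> a t \<omega>"
    using assms(12) unfolding H2_def by blast
  have pred: "predictable M B T a" using assms(12) unfolding H2_def by blast
  have aj: "(\<lambda>(t, \<omega>). a t \<omega>) \<in> borel_measurable (restrict_space lborel {0..T} \<Otimes>\<^sub>M M)"
    by (rule pred_joint[OF assms(3) T0 pred])
  have sf: "sigma_finite_measure M" by unfold_locales
  have IAm[measurable]: "(\<lambda>\<omega>. LINT s:{0..T}|lborel. a s \<omega>) \<in> borel_measurable M"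
    by (rule LINT_meas[OF sf aj])
  define \<kappa>0 where "\<kappa>0 = (\<lambda>x::real. \<kappa> (max 0 x))"
  have k0c: "continuous_on UNIV \<kappa>0"
    unfolding \<kappa>0_def by (rule continuous_on_compose2[OF assms(7)]) (auto intro!: continuous_intros)
  have "(\<lambda>x. \<kappa>0 ((\<lambda>(t, \<omega>). a t \<omega>) x)) \<in> borel_measurable (restrict_space lborel {0..T} \<Otimes>\<^sub>M M)"
    by (rule borel_measurable_continuous_on[OF k0c aj])
  moreover have "\<And>x. x \<in> space (restrict_space lborel {0..T} \<Otimes>\<^sub>M M) \<Longrightarrow>
      \<kappa>0 ((\<lambda>(t, \<omega>). a t \<omega>) x) = (\<lambda>(t, \<omega>). \<kappa> (a t \<omega>)) x"
    using anonneg unfolding \<kappa>0_def by (auto simp: space_pair_measure space_restrict_space max_def)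
  ultimately have kj: "(\<lambda>(t, \<omega>). \<kappa> (a t \<omega>)) \<in> borel_measurable (restrict_space lborel {0..T} \<Otimes>\<^sub>M M)"
    using measurable_cong by (smt (verit))
  have Cm[measurable]: "cost \<kappa> T a \<in> borel_measurable M"
    unfolding cost_def[abs_def] by (rule LINT_meas[OF sf kj])
  have Xm[measurable]: "XT x0 T B a \<in> borel_measurable M"
    unfolding XT_def[abs_def] by measurable
  define X where "X = XT x0 T B a"
  define C where "C = cost \<kappa> T a"
  define F where "F = (\<lambda>\<omega>. exp (- \<gamma>P * (X \<omega> - W \<omega>)))"
  define G where "G = (\<lambda>\<omega>. exp (- \<gamma>A * (W \<omega> - C \<omega>)))"
  define r where "r = \<gamma>A / (\<gamma>A + \<gamma>P)"
  have r0: "0 < r" and r1: "r < 1" unfolding r_def using assms(4,5) by auto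
  have Fm: "F \<in> borel_measurable M" unfolding F_def X_def by measurable
  have Gm: "G \<in> borel_measurable M" unfolding G_def C_def by measurable
  have pos: "\<And>\<omega>. \<omega> \<in> space M \<Longrightarrow> 0 < F \<omega> \<and> 0 < G \<omega>" unfolding F_def G_def by simp
  have IA0: "0 \<le> (LINT s:{0..T}|lborel. a s \<omega>)" if "\<omega> \<in> space M" for \<omega>
    unfolding set_lebesgue_integral_def
    by (rule Bochner_Integration.integral_nonneg) (use anonneg that in \<open>auto simp: indicator_def\<close>)
  have Bi: "integrable M (\<lambda>\<omega>. exp (- \<gamma>P * x0) * ((exp ((- 2 * \<gamma>P) * B T \<omega>) + exp ((2 * \<gamma>P) * W \<omega>)) / 2))"
    using bm_exp_integrable[OF assms(3) assms(2), of "- 2 * \<gamma>P"] Wi[of "2 * \<gamma>P"] assms(4) by simp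
  have Fi: "integrable M F"
  proof (rule Bochner_Integration.integrable_bound[OF Bi Fm], rule AE_I2)
    fix \<omega> assume w: "\<omega> \<in> space M"
    have "F \<omega> \<le> exp (- \<gamma>P * x0) * ((exp ((- 2 * \<gamma>P) * B T \<omega>) + exp ((2 * \<gamma>P) * W \<omega>)) / 2)"
      unfolding F_def X_def XT_def by (rule exp_bound[OF assms(4) IA0[OF w]])
    then show "norm (F \<omega>) \<le> norm (exp (- \<gamma>P * x0) * ((exp ((- 2 * \<gamma>P) * B T \<omega>) + exp ((2 * \<gamma>P) * W \<omega>)) / 2))"
      unfolding F_def by simp
  qed
  note R = holder_abstract[OF assms(1) r0 r1 Fm Gm pos Fi]
  have e1: "(\<integral>\<omega>. U \<gamma>P (XT x0 T B a \<omega> - W \<omega>) \<partial>M) = - (\<integral>\<omega>. F \<omega> \<partial>M)"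
    unfolding U_def F_def X_def by simp
  have e2: "(\<integral>\<omega>. \<bar>U \<gamma>P (XT x0 T B a \<omega> - cost \<kappa> T a \<omega>)\<bar> powr (\<gamma>A / (\<gamma>A + \<gamma>P)) \<partial>M)
      = (\<integral>\<omega>. F \<omega> powr r * G \<omega> powr (1 - r) \<partial>M)"
  proof (rule Bochner_Integration.integral_cong[OF refl])
    fix \<omega>
    have ar: "- \<gamma>P * (X \<omega> - C \<omega>) * r = - \<gamma>P * (X \<omega> - W \<omega>) * r + - \<gamma>A * (W \<omega> - C \<omega>) * (1 - r)"
      using ar_lemma[of "\<gamma>A + \<gamma>P" \<gamma>A \<gamma>P "X \<omega>" "C \<omega>" "W \<omega>"] assms(4,5) unfolding r_def by simp
    show "\<bar>U \<gamma>P (XT x0 T B a \<omega> - cost \<kappa> T a \<omega>)\<bar> powr (\<gamma>A / (\<gamma>A + \<gamma>P)) = F \<omega> powr r * G \<omega> powr (1 - r)"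
      unfolding U_def F_def G_def X_def[symmetric] C_def[symmetric] r_def[symmetric]
      by (simp add: exp_powr_real mult_exp_exp) (use ar in linarith)
  qed
  have e3: "(\<gamma>A + \<gamma>P) / \<gamma>A = 1 / r" unfolding r_def by simp
  have e4: "- \<gamma>P / \<gamma>A = - ((1 - r) / r)"
  proof -
    have s0: "\<gamma>A + \<gamma>P > 0" using assms(4,5) by simp
    have "1 - r = \<gamma>P / (\<gamma>A + \<gamma>P)" unfolding r_def using s0 by (simp add: field_simps)
    then have "(1 - r) / r = (\<gamma>P / (\<gamma>A + \<gamma>P)) / (\<gamma>A / (\<gamma>A + \<gamma>P))" unfolding r_def by simp
    also have "\<dots> = \<gamma>P / \<gamma>A" using s0 by simp
    finally show ?thesis by simp
  qed
  have e5: "- (\<integral>\<omega>. U \<gamma>A (W \<omega> - cost \<kappa> T a \<omega>) \<partial>M) = (\<integral>\<omega>. G \<omega> \<partial>M)"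
    unfolding U_def G_def C_def by simp
  have e6: "(\<exists>\<alpha>>0. AE \<omega> in M. deriv (U \<gamma>P) (XT x0 T B a \<omega> - W \<omega>) / deriv (U \<gamma>A) (W \<omega> - cost \<kappa> T a \<omega>) = \<alpha>)
      \<longleftrightarrow> (\<exists>\<alpha>>0. AE \<omega> in M. F \<omega> / G \<omega> = \<alpha>)"
  proof -
    have rat: "deriv (U \<gamma>P) (XT x0 T B a \<omega> - W \<omega>) / deriv (U \<gamma>A) (W \<omega> - cost \<kappa> T a \<omega>)
        = (\<gamma>P / \<gamma>A) * (F \<omega> / G \<omega>)" for \<omega>
      unfolding deriv_U F_def G_def X_def C_def by simp
    have k: "\<gamma>P / \<gamma>A > 0" using assms(4,5) by simp
    show ?thesis unfolding rat
    proof
      assume "\<exists>\<alpha>>0. AE \<omega> in M. \<gamma>P / \<gamma>A * (F \<omega> / G \<omega>) = \<alpha>"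
      then obtain \<alpha> where al: "\<alpha> > 0" "AE \<omega> in M. \<gamma>P / \<gamma>A * (F \<omega> / G \<omega>) = \<alpha>" by blast
      have "AE \<omega> in M. F \<omega> / G \<omega> = \<alpha> / (\<gamma>P / \<gamma>A)"
        using al(2) by eventually_elim (use k in \<open>auto simp: field_simps\<close>)
      then show "\<exists>\<alpha>>0. AE \<omega> in M. F \<omega> / G \<omega> = \<alpha>" using al(1) k by (intro exI[of _ "\<alpha> / (\<gamma>P / \<gamma>A)"]) (auto simp del: divide_divide_eq_right)
    next
      assume "\<exists>\<alpha>>0. AE \<omega> in M. F \<omega> / G \<omega> = \<alpha>"
      then obtain \<alpha> where al: "\<alpha> > 0" "AE \<omega> in M. F \<omega> / G \<omega> = \<alpha>" by blast
      have "AE \<omega> in M. \<gamma>P / \<gamma>A * (F \<omega> / G \<omega>) = \<gamma>P / \<gamma>A * \<alpha>"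
        using al(2) by eventually_elim simp
      then show "\<exists>\<alpha>>0. AE \<omega> in M. \<gamma>P / \<gamma>A * (F \<omega> / G \<omega>) = \<alpha>"
        using mult_pos_pos[OF k al(1)] by blast
    qed
  qed
  show ?thesis unfolding e1 e2 e3 e4 e5 e6 using R by blast
qed

end
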